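(* Let $G$ be a finite group, $m\ge 3$ an integer, $R,L,T$ Cayley subsets of $G$, $S\subseteq G$ with $|R|=|L|=|T|-|S|+1$, and $x\in G\setminus S$. Let $\Theta$ be the graph with vertex set $G\times\{0,\dots,m-1\}$ (writing $g_i$ for $(g,i)$, $G_i=G\times\{i\}$) whose edges are: $\{g_0,(rg)_0\}$ ($g\in G,r\in R$); $\{g_1,(lg)_1\}$ ($g\in G,l\in L$); $\{g_0,(sg)_1\}$ ($g\in G,s\in S$); $\{g_i,(tg)_i\}$ ($i\in\{2,\dots,m-1\}$, $g\in G$, $t\in T$); $\{g_i,g_{i+1}\}$ ($g\in G$, $i\in\{1,\dots,m-2\}$); $\{g_0,(xg)_{m-1}\}$ ($g\in G$). Suppose that (a) $\mathrm{BiCay}(G,R,L,S)$ is a $2$-GRR, and (b) for each $i\in\{2,\dots,m-1\}$, $[\Theta(1_0)]\not\cong[\Theta(1_i)]$ and $[\Theta(1_1)]\not\cong[\Theta(1_i)]$. Then $\Theta$ is an $m$-GRR for $G$.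
   Context: A Cayley subset is $X\subseteq G$ with $X=X^{-1}$ and $1\notin X$. $\mathrm{BiCay}(G,R,L,S)$ is the graph with vertex set $G\times\{0,1\}$ and edges $\{g_0,(rg)_0\}$, $\{g_1,(lg)_1\}$, $\{g_0,(sg)_1\}$ for $g\in G$, $r\in R$, $l\in L$, $s\in S$. For a vertex $v$, $\Theta(v)$ is its neighbourhood and $[\Theta(v)]$ the subgraph of $\Theta$ induced on it. An $m$-GRR for $G$ is a finite regular simple graph with a semiregular automorphism group isomorphic to $G$ having $m$ vertex-orbits (here the maps $y_i\mapsto(yg)_i$) and whose full automorphism group is isomorphic to $G$. *)

theory Defs
  imports "HOL-Algebra.Algebra"
begin

definition cayley_subset :: "('a, 'b) monoid_scheme \<Rightarrow> 'a set \<Rightarrow> bool" where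
  "cayley_subset G Y \<longleftrightarrow> Y \<subseteq> carrier G \<and> (\<forall>y\<in>Y. m_inv G y \<in> Y) \<and> monoid.one G \<notin> Y"

definition simple_graph :: "'v set \<Rightarrow> ('v \<Rightarrow> 'v \<Rightarrow> bool) \<Rightarrow> bool" where
  "simple_graph V adj \<longleftrightarrow> (\<forall>u v. adj u v \<longrightarrow> u \<in> V \<and> v \<in> V)
     \<and> (\<forall>u v. adj u v \<longrightarrow> adj v u) \<and> (\<forall>v. \<not> adj v v)"

definition nbhd :: "'v set \<Rightarrow> ('v \<Rightarrow> 'v \<Rightarrow> bool) \<Rightarrow> 'v \<Rightarrow> 'v set" where
  "nbhd V adj v = {u \<in> V. adj v u}"

definition regular_graph :: "'v set \<Rightarrow> ('v \<Rightarrow> 'v \<Rightarrow> bool) \<Rightarrow> bool" where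
  "regular_graph V adj \<longleftrightarrow> (\<exists>k. \<forall>v\<in>V. card (nbhd V adj v) = k)"

definition graph_auts :: "'v set \<Rightarrow> ('v \<Rightarrow> 'v \<Rightarrow> bool) \<Rightarrow> ('v \<Rightarrow> 'v) set" where
  "graph_auts V adj = {f \<in> Bij V. \<forall>u\<in>V. \<forall>w\<in>V. adj u w \<longleftrightarrow> adj (f u) (f w)}"

definition AutGroup :: "'v set \<Rightarrow> ('v \<Rightarrow> 'v \<Rightarrow> bool) \<Rightarrow> ('v \<Rightarrow> 'v) monoid" where
  "AutGroup V adj = (BijGroup V) \<lparr>carrier := graph_auts V adj\<rparr>"

definition induced_nbhd_iso :: "'v set \<Rightarrow> ('v \<Rightarrow> 'v \<Rightarrow> bool) \<Rightarrow> 'v \<Rightarrow> 'v \<Rightarrow> bool" where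
  "induced_nbhd_iso V adj v w \<longleftrightarrow> (\<exists>f. bij_betw f (nbhd V adj v) (nbhd V adj w) \<and>
     (\<forall>a\<in>nbhd V adj v. \<forall>b\<in>nbhd V adj v. adj a b \<longleftrightarrow> adj (f a) (f b)))"

definition layered_verts :: "('a, 'b) monoid_scheme \<Rightarrow> nat \<Rightarrow> ('a \<times> nat) set" where
  "layered_verts G m = carrier G \<times> {0..<m}"

definition rmult_map :: "('a, 'b) monoid_scheme \<Rightarrow> nat \<Rightarrow> 'a \<Rightarrow> ('a \<times> nat \<Rightarrow> 'a \<times> nat)" where
  "rmult_map G m g = (\<lambda>v \<in> layered_verts G m. (monoid.mult G (fst v) g, snd v))"

definition is_mGRR :: "('a, 'b) monoid_scheme \<Rightarrow> nat \<Rightarrow> ('a \<times> nat \<Rightarrow> 'a \<times> nat \<Rightarrow> bool) \<Rightarrow> bool" where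
  "is_mGRR G m adj \<longleftrightarrow>
     (let V = layered_verts G m; H = rmult_map G m ` carrier G; A = AutGroup V adj in
       finite V \<and> simple_graph V adj \<and> regular_graph V adj
       \<and> H \<subseteq> carrier A \<and> subgroup H A \<and> (A\<lparr>carrier := H\<rparr>) \<cong> G
       \<and> (\<forall>g\<in>carrier G. \<forall>v\<in>V. rmult_map G m g v = v \<longrightarrow> g = monoid.one G)
       \<and> card {(\<lambda>h. h v) ` H | v. v \<in> V} = m
       \<and> A \<cong> G)"

definition adj_of_edges :: "'v set set \<Rightarrow> 'v \<Rightarrow> 'v \<Rightarrow> bool" where
  "adj_of_edges E u v \<longleftrightarrow> {u, v} \<in> E"

definition BiCay_edges :: "('a, 'b) monoid_scheme \<Rightarrow> 'a set \<Rightarrow> 'a set \<Rightarrow> 'a set \<Rightarrow> ('a \<times> nat) set set" where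
  "BiCay_edges G R L S =
     {{(g, 0), (monoid.mult G r g, 0)} | g r. g \<in> carrier G \<and> r \<in> R}
   \<union> {{(g, 1), (monoid.mult G l g, 1)} | g l. g \<in> carrier G \<and> l \<in> L}
   \<union> {{(g, 0), (monoid.mult G s g, 1)} | g s. g \<in> carrier G \<and> s \<in> S}"

definition BiCay :: "('a, 'b) monoid_scheme \<Rightarrow> 'a set \<Rightarrow> 'a set \<Rightarrow> 'a set \<Rightarrow> ('a \<times> nat \<Rightarrow> 'a \<times> nat \<Rightarrow> bool)" where
  "BiCay G R L S = adj_of_edges (BiCay_edges G R L S)"

definition Theta_edges :: "('a, 'b) monoid_scheme \<Rightarrow> nat \<Rightarrow> 'a set \<Rightarrow> 'a set \<Rightarrow> 'a set \<Rightarrow> 'a set \<Rightarrow> 'a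
     \<Rightarrow> ('a \<times> nat) set set" where
  "Theta_edges G m R L S T x =
     BiCay_edges G R L S
   \<union> {{(g, i), (monoid.mult G t g, i)} | g t i. g \<in> carrier G \<and> t \<in> T \<and> 2 \<le> i \<and> i \<le> m - 1}
   \<union> {{(g, i), (g, i + 1)} | g i. g \<in> carrier G \<and> 1 \<le> i \<and> i \<le> m - 2}
   \<union> {{(g, 0), (monoid.mult G x g, m - 1)} | g. g \<in> carrier G}"

definition Theta :: "('a, 'b) monoid_scheme \<Rightarrow> nat \<Rightarrow> 'a set \<Rightarrow> 'a set \<Rightarrow> 'a set \<Rightarrow> 'a set \<Rightarrow> 'a
     \<Rightarrow> ('a \<times> nat \<Rightarrow> 'a \<times> nat \<Rightarrow> bool)" where
  "Theta G m R L S T x = adj_of_edges (Theta_edges G m R L S T x)"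

end

theory Submission
  imports Defs
begin


lemma graph_auts_sub: "subgroup (graph_auts V adj) (BijGroup V)"
proof (rule group.subgroupI[OF group_BijGroup])
  show "graph_auts V adj \<subseteq> carrier (BijGroup V)"
    by (auto simp: graph_auts_def BijGroup_def)
  show "graph_auts V adj \<noteq> {}"
  proof -
    have "(\<lambda>x\<in>V. x) \<in> graph_auts V adj" by (auto simp: graph_auts_def id_Bij)
    thus ?thesis by blast
  qed
  fix a assume a: "a \<in> graph_auts V adj"
  hence aB: "a \<in> Bij V" by (simp add: graph_auts_def)
  have bij: "bij_betw a V V" using aB by (simp add: Bij_def)
  show "inv\<^bsub>BijGroup V\<^esub> a \<in> graph_auts V adj"
    unfolding inv_BijGroup[OF aB] graph_auts_def
  proof (intro CollectI conjI ballI)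
    show "(\<lambda>x\<in>V. inv_into V a x) \<in> Bij V" using restrict_inv_into_Bij[OF aB] .
    fix u w assume u: "u \<in> V" and w: "w \<in> V"
    have iu: "inv_into V a u \<in> V" "a (inv_into V a u) = u"
      using bij u by (auto simp: bij_betw_def inv_into_into f_inv_into_f)
    have iw: "inv_into V a w \<in> V" "a (inv_into V a w) = w"
      using bij w by (auto simp: bij_betw_def inv_into_into f_inv_into_f)
    show "adj u w = adj ((\<lambda>x\<in>V. inv_into V a x) u) ((\<lambda>x\<in>V. inv_into V a x) w)"
      using a iu iw u w unfolding graph_auts_def by auto
  qed
next
  fix a b assume a: "a \<in> graph_auts V adj" and b: "b \<in> graph_auts V adj"
  hence aB: "a \<in> Bij V" and bB: "b \<in> Bij V" by (auto simp: graph_auts_def)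
  have "b \<in> V \<rightarrow> V" using bB by (rule Bij_imp_funcset)
  have "compose V a b \<in> Bij V" using aB bB by (rule compose_Bij)
  moreover have "\<forall>u\<in>V. \<forall>w\<in>V. adj u w \<longleftrightarrow> adj (compose V a b u) (compose V a b w)"
  proof (intro ballI)
    fix u w assume "u \<in> V" "w \<in> V"
    moreover have "\<forall>u\<in>V. \<forall>w\<in>V. adj u w \<longleftrightarrow> adj (a u) (a w)"
      "\<forall>u\<in>V. \<forall>w\<in>V. adj u w \<longleftrightarrow> adj (b u) (b w)" using a b by (auto simp: graph_auts_def)
    ultimately have "adj u w \<longleftrightarrow> adj (a (b u)) (a (b w))"
      using \<open>b \<in> V \<rightarrow> V\<close> by (metis PiE)
    thus "adj u w \<longleftrightarrow> adj (compose V a b u) (compose V a b w)"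
      using \<open>u \<in> V\<close> \<open>w \<in> V\<close> by (simp add: compose_def)
  qed
  ultimately have "compose V a b \<in> graph_auts V adj" by (simp add: graph_auts_def)
  thus "a \<otimes>\<^bsub>BijGroup V\<^esub> b \<in> graph_auts V adj"
    using aB bB by (simp add: BijGroup_def)
qed

lemma group_Aut: "group (AutGroup V adj)"
  unfolding AutGroup_def
  by (rule group.subgroup_imp_group[OF group_BijGroup graph_auts_sub])

lemma AutGroup_carrier [simp]: "carrier (AutGroup V adj) = graph_auts V adj"
  by (simp add: AutGroup_def)

lemma AutGroup_mult: "a \<in> graph_auts V adj \<Longrightarrow> b \<in> graph_auts V adj \<Longrightarrow>
   a \<otimes>\<^bsub>AutGroup V adj\<^esub> b = compose V a b"
  by (simp add: AutGroup_def BijGroup_def graph_auts_def)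

lemma AutGroup_one: "\<one>\<^bsub>AutGroup V adj\<^esub> = (\<lambda>x\<in>V. x)"
  by (simp add: AutGroup_def BijGroup_def)

lemma aut_nbhd_bij:
  assumes f: "f \<in> graph_auts V adj" and u: "u \<in> V"
  shows "bij_betw f (nbhd V adj u) (nbhd V adj (f u))"
proof -
  have bij: "bij_betw f V V" using f by (simp add: graph_auts_def Bij_def)
  have pres: "\<And>a b. a \<in> V \<Longrightarrow> b \<in> V \<Longrightarrow> adj a b = adj (f a) (f b)"
    using f by (simp add: graph_auts_def)
  have "f ` nbhd V adj u = nbhd V adj (f u)"
  proof
    show "f ` nbhd V adj u \<subseteq> nbhd V adj (f u)"
      using bij pres u by (auto simp: nbhd_def bij_betw_def)
    show "nbhd V adj (f u) \<subseteq> f ` nbhd V adj u"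
    proof
      fix y assume y: "y \<in> nbhd V adj (f u)"
      then obtain z where z: "z \<in> V" "y = f z" using bij by (auto simp: nbhd_def bij_betw_def)
      thus "y \<in> f ` nbhd V adj u" using y pres u by (auto simp: nbhd_def)
    qed
  qed
  moreover have "inj_on f (nbhd V adj u)"
    using bij by (auto simp: bij_betw_def nbhd_def intro: inj_on_subset)
  ultimately show ?thesis by (simp add: bij_betw_def)
qed

lemma aut_nbhd_iso:
  assumes f: "f \<in> graph_auts V adj" and u: "u \<in> V"
  shows "induced_nbhd_iso V adj u (f u)"
  unfolding induced_nbhd_iso_def
proof (intro exI conjI ballI)
  show "bij_betw f (nbhd V adj u) (nbhd V adj (f u))" by (rule aut_nbhd_bij[OF f u])
  fix a b assume "a \<in> nbhd V adj u" "b \<in> nbhd V adj u"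
  thus "adj a b = adj (f a) (f b)" using f by (auto simp: graph_auts_def nbhd_def)
qed

lemma aut_card_nbhd:
  assumes f: "f \<in> graph_auts V adj" and u: "u \<in> V"
  shows "card (nbhd V adj (f u)) = card (nbhd V adj u)"
  using bij_betw_same_card[OF aut_nbhd_bij[OF f u]] by simp


lemma aut_compose: "a \<in> graph_auts V adj \<Longrightarrow> b \<in> graph_auts V adj \<Longrightarrow> compose V a b \<in> graph_auts V adj"
  using monoid.m_closed[OF group.is_monoid[OF group_Aut], of a V adj b] by (simp add: AutGroup_mult)

lemma aut_V: "f \<in> graph_auts V adj \<Longrightarrow> u \<in> V \<Longrightarrow> f u \<in> V"
  by (auto simp: graph_auts_def Bij_def bij_betw_def)

lemma aut_inj: "f \<in> graph_auts V adj \<Longrightarrow> inj_on f V"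
  by (auto simp: graph_auts_def Bij_def bij_betw_def)

lemma aut_adj: "f \<in> graph_auts V adj \<Longrightarrow> u \<in> V \<Longrightarrow> w \<in> V \<Longrightarrow> adj u w \<longleftrightarrow> adj (f u) (f w)"
  by (auto simp: graph_auts_def)



locale thsetup = group +
  fixes m :: nat and R L S T :: "'a set" and x :: 'a
  assumes fin: "finite (carrier G)" and m3: "m \<ge> 3"
    and cR: "cayley_subset G R" and cL: "cayley_subset G L" and cT: "cayley_subset G T"
    and Ssub: "S \<subseteq> carrier G" and xc: "x \<in> carrier G"
begin

lemma Rsub: "R \<subseteq> carrier G" and Rinv: "r \<in> R \<Longrightarrow> inv r \<in> R" and R1: "\<one> \<notin> R"
  using cR by (auto simp: cayley_subset_def)
lemma Lsub: "L \<subseteq> carrier G" and Linv: "r \<in> L \<Longrightarrow> inv r \<in> L" and L1: "\<one> \<notin> L"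
  using cL by (auto simp: cayley_subset_def)
lemma Tsub: "T \<subseteq> carrier G" and Tinv: "r \<in> T \<Longrightarrow> inv r \<in> T" and T1: "\<one> \<notin> T"
  using cT by (auto simp: cayley_subset_def)

lemma alg1: "r \<in> carrier G \<Longrightarrow> g \<in> carrier G \<Longrightarrow> (r \<otimes> g) \<otimes> inv g = r"
  by (simp add: m_assoc)
lemma alg2: "r \<in> carrier G \<Longrightarrow> g \<in> carrier G \<Longrightarrow> g \<otimes> inv (r \<otimes> g) = inv r"
  by (simp add: inv_mult_group m_assoc[symmetric])
lemma alg3: "a \<in> carrier G \<Longrightarrow> b \<in> carrier G \<Longrightarrow> (b \<otimes> inv a) \<otimes> a = b"
  by (simp add: m_assoc)

definition tadj :: "'a \<times> nat \<Rightarrow> 'a \<times> nat \<Rightarrow> bool" where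
  "tadj u v = (case u of (a, i) \<Rightarrow> case v of (b, j) \<Rightarrow>
     a \<in> carrier G \<and> b \<in> carrier G \<and> i < m \<and> j < m \<and> (
     (i = 0 \<and> j = 0 \<and> b \<otimes> inv a \<in> R) \<or> (i = 1 \<and> j = 1 \<and> b \<otimes> inv a \<in> L) \<or>
     (i = 0 \<and> j = 1 \<and> b \<otimes> inv a \<in> S) \<or> (i = 1 \<and> j = 0 \<and> a \<otimes> inv b \<in> S) \<or>
     (2 \<le> i \<and> j = i \<and> b \<otimes> inv a \<in> T) \<or> (1 \<le> i \<and> j = Suc i \<and> a = b) \<or>
     (1 \<le> j \<and> i = Suc j \<and> a = b) \<or> (i = 0 \<and> j = m - 1 \<and> b = x \<otimes> a) \<or>
     (j = 0 \<and> i = m - 1 \<and> a = x \<otimes> b)))"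

lemma edge_sym_case:
  assumes X: "Y \<subseteq> carrier G" "\<And>r. r \<in> Y \<Longrightarrow> inv r \<in> Y"
    and e: "{(a, i), (b, j)} = {(g, k), (r \<otimes> g, k)}" and g: "g \<in> carrier G" and r: "r \<in> Y"
  shows "a \<in> carrier G \<and> b \<in> carrier G \<and> i = k \<and> j = k \<and> b \<otimes> inv a \<in> Y"
proof -
  have rc: "r \<in> carrier G" using X r by blast
  from e have "((a, i) = (g, k) \<and> (b, j) = (r \<otimes> g, k)) \<or> ((a, i) = (r \<otimes> g, k) \<and> (b, j) = (g, k))"
    by (simp add: doubleton_eq_iff)
  thus ?thesis
  proof
    assume h: "(a, i) = (g, k) \<and> (b, j) = (r \<otimes> g, k)"
    hence "b \<otimes> inv a = r" using rc g by (simp add: alg1)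
    thus ?thesis using h rc g r by auto
  next
    assume h: "(a, i) = (r \<otimes> g, k) \<and> (b, j) = (g, k)"
    hence "b \<otimes> inv a = inv r" using rc g by (simp add: alg2)
    thus ?thesis using h rc g r X(2) by auto
  qed
qed

lemma edge_S_case:
  assumes e: "{(a, i), (b, j)} = {(g, 0), (r \<otimes> g, 1)}" and g: "g \<in> carrier G" and r: "r \<in> S"
  shows "a \<in> carrier G \<and> b \<in> carrier G \<and> ((i = 0 \<and> j = 1 \<and> b \<otimes> inv a \<in> S) \<or> (i = 1 \<and> j = 0 \<and> a \<otimes> inv b \<in> S))"
proof -
  have rc: "r \<in> carrier G" using Ssub r by blast
  from e have "((a, i) = (g, 0) \<and> (b, j) = (r \<otimes> g, 1)) \<or> ((a, i) = (r \<otimes> g, 1) \<and> (b, j) = (g, 0))"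
    by (simp add: doubleton_eq_iff)
  thus ?thesis
  proof
    assume h: "(a, i) = (g, 0) \<and> (b, j) = (r \<otimes> g, 1)"
    hence "b \<otimes> inv a = r" using rc g by (simp add: alg1)
    thus ?thesis using h rc g r by auto
  next
    assume h: "(a, i) = (r \<otimes> g, 1) \<and> (b, j) = (g, 0)"
    hence "a \<otimes> inv b = r" using rc g by (simp add: alg1)
    thus ?thesis using h rc g r by auto
  qed
qed

lemma Theta_char: "Theta G m R L S T x (a, i) (b, j) \<longleftrightarrow> tadj (a, i) (b, j)"
proof
  assume "Theta G m R L S T x (a, i) (b, j)"
  hence E: "{(a, i), (b, j)} \<in> Theta_edges G m R L S T x" by (simp add: Theta_def adj_of_edges_def)
  show "tadj (a, i) (b, j)"
    using E unfolding Theta_edges_def BiCay_edges_def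
  proof (elim UnE)
    assume "{(a, i), (b, j)} \<in> {{(g, 0), (r \<otimes> g, 0)} |g r. g \<in> carrier G \<and> r \<in> R}"
    then obtain g r where "{(a, i), (b, j)} = {(g, 0), (r \<otimes> g, 0)}" "g \<in> carrier G" "r \<in> R" by blast
    from edge_sym_case[OF Rsub Rinv this] show ?thesis using m3 by (auto simp: tadj_def)
  next
    assume "{(a, i), (b, j)} \<in> {{(g, 1), (r \<otimes> g, 1)} |g r. g \<in> carrier G \<and> r \<in> L}"
    then obtain g r where "{(a, i), (b, j)} = {(g, 1), (r \<otimes> g, 1)}" "g \<in> carrier G" "r \<in> L" by blast
    from edge_sym_case[OF Lsub Linv this] show ?thesis using m3 by (auto simp: tadj_def)
  next
    assume "{(a, i), (b, j)} \<in> {{(g, 0), (r \<otimes> g, 1)} |g r. g \<in> carrier G \<and> r \<in> S}"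
    then obtain g r where "{(a, i), (b, j)} = {(g, 0), (r \<otimes> g, 1)}" "g \<in> carrier G" "r \<in> S" by blast
    from edge_S_case[OF this] show ?thesis using m3 by (auto simp: tadj_def)
  next
    assume "{(a, i), (b, j)} \<in> {{(g, i), (t \<otimes> g, i)} |g t i. g \<in> carrier G \<and> t \<in> T \<and> 2 \<le> i \<and> i \<le> m - 1}"
    then obtain g r k where "{(a, i), (b, j)} = {(g, k), (r \<otimes> g, k)}" "g \<in> carrier G" "r \<in> T" "2 \<le> k" "k \<le> m - 1" by blast
    from edge_sym_case[OF Tsub Tinv this(1-3)] show ?thesis using m3 \<open>2 \<le> k\<close> \<open>k \<le> m - 1\<close> by (auto simp: tadj_def)
  next
    assume "{(a, i), (b, j)} \<in> {{(g, i), (g, i + 1)} |g i. g \<in> carrier G \<and> 1 \<le> i \<and> i \<le> m - 2}"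
    then obtain g k where "{(a, i), (b, j)} = {(g, k), (g, k + 1)}" "g \<in> carrier G" "1 \<le> k" "k \<le> m - 2" by blast
    thus ?thesis using m3 by (auto simp: doubleton_eq_iff tadj_def)
  next
    assume "{(a, i), (b, j)} \<in> {{(g, 0), (x \<otimes> g, m - 1)} |g. g \<in> carrier G}"
    then obtain g where "{(a, i), (b, j)} = {(g, 0), (x \<otimes> g, m - 1)}" "g \<in> carrier G" by blast
    thus ?thesis using m3 xc by (auto simp: doubleton_eq_iff tadj_def)
  qed
next
  assume t: "tadj (a, i) (b, j)"
  hence ab: "a \<in> carrier G" "b \<in> carrier G" "i < m" "j < m" by (auto simp: tadj_def)
  have "{(a, i), (b, j)} \<in> Theta_edges G m R L S T x"
  proof -
    from t consider
      "i = 0 \<and> j = 0 \<and> b \<otimes> inv a \<in> R" | "i = 1 \<and> j = 1 \<and> b \<otimes> inv a \<in> L" |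
      "i = 0 \<and> j = 1 \<and> b \<otimes> inv a \<in> S" | "i = 1 \<and> j = 0 \<and> a \<otimes> inv b \<in> S" |
      "2 \<le> i \<and> j = i \<and> b \<otimes> inv a \<in> T" | "1 \<le> i \<and> j = Suc i \<and> a = b" |
      "1 \<le> j \<and> i = Suc j \<and> a = b" | "i = 0 \<and> j = m - 1 \<and> b = x \<otimes> a" |
      "j = 0 \<and> i = m - 1 \<and> a = x \<otimes> b" by (auto simp: tadj_def)
    thus ?thesis
    proof cases
      case 1
      hence "{(a, i), (b, j)} = {(a, 0), ((b \<otimes> inv a) \<otimes> a, 0)}" using ab by (simp add: alg3)
      thus ?thesis using 1 ab unfolding Theta_edges_def BiCay_edges_def by blast
    next
      case 2
      hence "{(a, i), (b, j)} = {(a, 1), ((b \<otimes> inv a) \<otimes> a, 1)}" using ab by (simp add: alg3)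
      thus ?thesis using 2 ab unfolding Theta_edges_def BiCay_edges_def by blast
    next
      case 3
      hence "{(a, i), (b, j)} = {(a, 0), ((b \<otimes> inv a) \<otimes> a, 1)}" using ab by (simp add: alg3)
      thus ?thesis using 3 ab unfolding Theta_edges_def BiCay_edges_def by blast
    next
      case 4
      hence "{(a, i), (b, j)} = {(b, 0), ((a \<otimes> inv b) \<otimes> b, 1)}" using ab by (auto simp: alg3)
      thus ?thesis using 4 ab unfolding Theta_edges_def BiCay_edges_def by blast
    next
      case 5
      hence "{(a, i), (b, j)} = {(a, i), ((b \<otimes> inv a) \<otimes> a, i)}" using ab by (simp add: alg3)
      moreover have "i \<le> m - 1" using ab by simp
      ultimately show ?thesis using 5 ab unfolding Theta_edges_def by blast
    next
      case 6
      hence "{(a, i), (b, j)} = {(a, i), (a, i + 1)}" "i \<le> m - 2" using ab by auto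
      thus ?thesis using 6 ab unfolding Theta_edges_def by blast
    next
      case 7
      hence "{(a, i), (b, j)} = {(a, j), (a, j + 1)}" "j \<le> m - 2" using ab by auto
      thus ?thesis using 7 ab unfolding Theta_edges_def by blast
    next
      case 8
      thus ?thesis using ab unfolding Theta_edges_def by blast
    next
      case 9
      hence "{(a, i), (b, j)} = {(b, 0), (x \<otimes> b, m - 1)}" by auto
      thus ?thesis using ab unfolding Theta_edges_def by blast
    qed
  qed
  thus "Theta G m R L S T x (a, i) (b, j)" by (simp add: Theta_def adj_of_edges_def)
qed


abbreviation "V \<equiv> layered_verts G m"
abbreviation "Th \<equiv> Theta G m R L S T x"
abbreviation "rho \<equiv> rmult_map G m"

lemma inV: "(a, i) \<in> V \<longleftrightarrow> a \<in> carrier G \<and> i < m"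
  by (simp add: layered_verts_def)

lemma simple: "simple_graph V Th"
  unfolding simple_graph_def
proof (intro conjI allI impI)
  fix u v assume "Th u v"
  thus "u \<in> V" "v \<in> V" by (cases u, cases v, auto simp: Theta_char tadj_def inV)+
next
  fix u v assume "Th u v" thus "Th v u" by (simp add: Theta_def adj_of_edges_def insert_commute)
next
  fix v show "\<not> Th v v"
  proof (cases v)
    case (Pair a i)
    show ?thesis using R1 L1 T1 m3 by (auto simp: Pair Theta_char tadj_def)
  qed
qed

lemma alg4: "a \<in> carrier G \<Longrightarrow> b \<in> carrier G \<Longrightarrow> g \<in> carrier G \<Longrightarrow> (b \<otimes> g) \<otimes> inv (a \<otimes> g) = b \<otimes> inv a"
  by (simp add: inv_mult_group m_assoc r_inv_ex m_assoc[symmetric])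
lemma alg5: "a \<in> carrier G \<Longrightarrow> b \<in> carrier G \<Longrightarrow> g \<in> carrier G \<Longrightarrow> (b \<otimes> g = x \<otimes> (a \<otimes> g)) \<longleftrightarrow> b = x \<otimes> a"
  using xc by (metis m_assoc m_closed r_cancel)

lemma rho_apply: "(a, i) \<in> V \<Longrightarrow> rho g (a, i) = (a \<otimes> g, i)"
  by (simp add: rmult_map_def)

lemma rho_aut: assumes g: "g \<in> carrier G" shows "rho g \<in> graph_auts V Th"
  unfolding graph_auts_def
proof (intro CollectI conjI ballI)
  have "bij_betw (rho g) V V"
  proof (rule bij_betwI')
    fix u v assume "u \<in> V" "v \<in> V"
    thus "(rho g u = rho g v) = (u = v)" using g by (cases u, cases v, auto simp: rho_apply inV)
  next
    fix u assume "u \<in> V" thus "rho g u \<in> V" using g by (cases u, auto simp: rho_apply inV)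
  next
    fix v assume v: "v \<in> V"
    obtain b j where bj: "v = (b, j)" by (cases v)
    have "(b \<otimes> inv g, j) \<in> V" "rho g (b \<otimes> inv g, j) = v" using v g by (auto simp: bj inV rho_apply m_assoc)
    thus "\<exists>u\<in>V. v = rho g u" by metis
  qed
  thus "rho g \<in> Bij V" by (simp add: Bij_def rmult_map_def)
  fix u w assume "u \<in> V" "w \<in> V"
  then obtain a i b j where u: "u = (a, i)" and w: "w = (b, j)" and ai: "a \<in> carrier G" "i < m"
    and bj: "b \<in> carrier G" "j < m" by (cases u, cases w, auto simp: inV)
  show "Th u w = Th (rho g u) (rho g w)"
    using ai bj g by (simp add: u w inV rho_apply Theta_char tadj_def alg4 alg5)
qed

lemma rho_one: "(\<one>, i) \<in> V \<Longrightarrow> g \<in> carrier G \<Longrightarrow> rho g (\<one>, i) = (g, i)"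
  by (simp add: rho_apply)

lemma nb0: "nbhd V Th (\<one>, 0) = R \<times> {0} \<union> S \<times> {1} \<union> {(x, m - 1)}"
  using Rsub Ssub xc m3 by (auto simp: nbhd_def inV Theta_char tadj_def)


lemma tadj1: "tadj (\<one>, i) (b, j) \<longleftrightarrow> b \<in> carrier G \<and> i < m \<and> j < m \<and>
   ((i=0\<and>j=0\<and>b\<in>R) \<or> (i=1\<and>j=1\<and>b\<in>L) \<or> (i=0\<and>j=1\<and>b\<in>S) \<or> (i=1\<and>j=0\<and>inv b\<in>S) \<or>
    (2\<le>i\<and>j=i\<and>b\<in>T) \<or> (1\<le>i\<and>j=Suc i\<and>\<one>=b) \<or> (1\<le>j\<and>i=Suc j\<and>\<one>=b) \<or>
    (i=0\<and>j=m-1\<and>b=x) \<or> (j=0\<and>i=m-1\<and>\<one>=x\<otimes>b))"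
  unfolding tadj_def using xc by (simp cong: conj_cong)

lemma nb1: "nbhd V Th (\<one>, 1) = L \<times> {1} \<union> (\<lambda>s. (inv s, 0)) ` S \<union> {(\<one>, 2)}"
proof -
  have "\<And>b. b \<in> carrier G \<Longrightarrow> inv b \<in> S \<Longrightarrow> (b, 0::nat) \<in> (\<lambda>s. (inv s, 0)) ` S"
    by (metis image_eqI inv_inv)
  thus ?thesis unfolding set_eq_iff
    apply (intro allI)
    subgoal for v apply (cases v) using Lsub Ssub m3 by (auto simp: nbhd_def inV Theta_char tadj1)
    done
qed

lemma nbmid: "2 \<le> i \<Longrightarrow> i < m - 1 \<Longrightarrow> nbhd V Th (\<one>, i) = T \<times> {i} \<union> {(\<one>, i - 1), (\<one>, i + 1)}"
  unfolding set_eq_iff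
  apply (intro allI)
  subgoal for v apply (cases v) using Tsub by (auto simp: nbhd_def inV Theta_char tadj1)
  done

lemma xb_iff: "b \<in> carrier G \<Longrightarrow> (\<one> = x \<otimes> b) = (b = inv x)"
proof
  assume b: "b \<in> carrier G" "\<one> = x \<otimes> b"
  hence "b \<otimes> x = \<one>" using xc inv_comm by metis
  thus "b = inv x" using inv_equality b xc by metis
next
  assume "b = inv x" thus "\<one> = x \<otimes> b" using xc by simp
qed

lemma nblast: "nbhd V Th (\<one>, m - 1) = T \<times> {m - 1} \<union> {(\<one>, m - 2), (inv x, 0)}"
  unfolding set_eq_iff
proof (intro allI)
  fix v show "v \<in> nbhd V Th (\<one>, m - 1) \<longleftrightarrow> v \<in> T \<times> {m - 1} \<union> {(\<one>, m - 2), (inv x, 0)}"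
  proof (cases v)
    case (Pair b j)
    have "m - 1 \<noteq> 0" "m - 1 \<noteq> 1" "2 \<le> m - 1" "m - 1 = Suc (m - 2)" "1 \<le> m - 2" "m - 2 \<noteq> 0" "m - 2 < m" using m3 by auto
    thus ?thesis using Tsub xc unfolding Pair by (auto simp: nbhd_def inV Theta_char tadj1 xb_iff)
  qed
qed

lemma finR: "finite R" by (rule finite_subset[OF Rsub fin])
lemma finL: "finite L" by (rule finite_subset[OF Lsub fin])
lemma finS: "finite S" by (rule finite_subset[OF Ssub fin])
lemma finT: "finite T" by (rule finite_subset[OF Tsub fin])

lemma card_nb0: "card (nbhd V Th (\<one>, 0)) = card R + card S + 1"
proof -
  have "card (R \<times> {0::nat} \<union> S \<times> {1}) = card R + card S"
    by (subst card_Un_disjoint) (auto simp: finR finS card_cartesian_product)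
  moreover have "(x, m - 1) \<notin> R \<times> {0::nat} \<union> S \<times> {1}" using m3 by auto
  ultimately show ?thesis unfolding nb0 using finR finS by (simp add: card_insert_if)
qed

lemma card_nb1: "card (nbhd V Th (\<one>, 1)) = card L + card S + 1"
proof -
  have "card ((\<lambda>s. (inv s, 0::nat)) ` S) = card S"
    by (rule card_image) (auto simp: inj_on_def Ssub[THEN subsetD])
  hence "card (L \<times> {1::nat} \<union> (\<lambda>s. (inv s, 0::nat)) ` S) = card L + card S"
    by (subst card_Un_disjoint) (auto simp: finL finS card_cartesian_product)
  moreover have "(\<one>, 2::nat) \<notin> L \<times> {1::nat} \<union> (\<lambda>s. (inv s, 0)) ` S" by auto
  ultimately show ?thesis unfolding nb1 using finL finS by (simp add: card_insert_if)
qed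

lemma card_nbmid: "2 \<le> i \<Longrightarrow> i < m - 1 \<Longrightarrow> card (nbhd V Th (\<one>, i)) = card T + 2"
  unfolding nbmid using finT T1 by (simp add: card_insert_if card_cartesian_product)

lemma card_nblast: "card (nbhd V Th (\<one>, m - 1)) = card T + 2"
  unfolding nblast using finT m3 T1 by (simp add: card_insert_if card_cartesian_product)


lemma one_V: "i < m \<Longrightarrow> (\<one>, i) \<in> V" by (simp add: inV)

lemma card_nb_g:
  assumes "(g, i) \<in> V" shows "card (nbhd V Th (g, i)) = card (nbhd V Th (\<one>, i))"
proof -
  have g: "g \<in> carrier G" and i: "i < m" using assms by (auto simp: inV)
  have "card (nbhd V Th (rho g (\<one>, i))) = card (nbhd V Th (\<one>, i))"
    by (rule aut_card_nbhd[OF rho_aut[OF g] one_V[OF i]])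
  thus ?thesis using rho_one[OF one_V[OF i] g] by simp
qed

lemma regular:
  assumes c1: "card R = card L" and c2: "card L + card S = card T + 1"
  shows "regular_graph V Th"
  unfolding regular_graph_def
proof (intro exI ballI)
  fix v assume v: "v \<in> V"
  obtain g i where gi: "v = (g, i)" by (cases v)
  have i: "i < m" using v gi by (simp add: inV)
  have "card (nbhd V Th (\<one>, i)) = card R + card S + 1"
  proof -
    consider "i = 0" | "i = 1" | "2 \<le> i \<and> i < m - 1" | "i = m - 1" using i by linarith
    thus ?thesis
    proof cases
      case 1 thus ?thesis by (simp add: card_nb0)
    next
      case 2 thus ?thesis using c1 card_nb1 by simp
    next
      case 3 thus ?thesis using c1 c2 card_nbmid by simp
    next
      case 4 thus ?thesis using c1 c2 card_nblast by simp
    qed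
  qed
  thus "card (nbhd V Th v) = card R + card S + 1" using card_nb_g v gi by simp
qed

lemma rho_in_V: "v \<in> V \<Longrightarrow> g \<in> carrier G \<Longrightarrow> rho g v \<in> V"
  by (cases v) (simp add: rho_apply inV)

lemma rho_compose: assumes a: "a \<in> carrier G" and b: "b \<in> carrier G"
  shows "compose V (rho a) (rho b) = rho (b \<otimes> a)"
proof
  fix v show "compose V (rho a) (rho b) v = rho (b \<otimes> a) v"
  proof (cases "v \<in> V")
    case True
    then obtain c i where v: "v = (c, i)" "c \<in> carrier G" "i < m" by (cases v) (auto simp: inV)
    show ?thesis using True a b v by (simp add: compose_def rho_apply inV m_assoc)
  next
    case False thus ?thesis by (simp add: compose_def rmult_map_def)
  qed
qed

lemma rho_inj: "a \<in> carrier G \<Longrightarrow> b \<in> carrier G \<Longrightarrow> rho a = rho b \<Longrightarrow> a = b"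
proof -
  assume a: "a \<in> carrier G" and b: "b \<in> carrier G" and e: "rho a = rho b"
  have "rho a (\<one>, 0) = rho b (\<one>, 0)" using e by simp
  thus "a = b" using a b m3 by (simp add: rho_apply inV)
qed

abbreviation "A \<equiv> AutGroup V Th"
abbreviation "H \<equiv> rho ` carrier G"

lemma H_sub: "H \<subseteq> graph_auts V Th" using rho_aut by auto

lemma G_iso_A: assumes eq: "graph_auts V Th = H" shows "G \<cong> A"
proof (rule is_isoI, rule isoI)
  let ?f = "\<lambda>g. rho (inv g)"
  show "?f \<in> hom G A"
  proof (rule homI)
    fix g assume "g \<in> carrier G" thus "?f g \<in> carrier A" using rho_aut by simp
  next
    fix g h assume g: "g \<in> carrier G" and h: "h \<in> carrier G"
    have "?f g \<otimes>\<^bsub>A\<^esub> ?f h = compose V (?f g) (?f h)"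
      using rho_aut g h by (simp add: AutGroup_mult)
    also have "\<dots> = rho (inv h \<otimes> inv g)" using g h by (simp add: rho_compose)
    also have "\<dots> = ?f (g \<otimes> h)" using g h by (simp add: inv_mult_group)
    finally show "?f (g \<otimes> h) = ?f g \<otimes>\<^bsub>A\<^esub> ?f h" by simp
  qed
  show "bij_betw ?f (carrier G) (carrier A)"
  proof (rule bij_betw_imageI)
    show "inj_on ?f (carrier G)"
      by (auto simp: inj_on_def dest!: rho_inj[rotated 2])
    have "?f ` carrier G = H"
    proof
      show "?f ` carrier G \<subseteq> H" by auto
      show "H \<subseteq> ?f ` carrier G"
      proof
        fix y assume "y \<in> H" then obtain g where g: "g \<in> carrier G" "y = rho g" by auto
        hence "y = ?f (inv g)" by simp
        thus "y \<in> ?f ` carrier G" using g by blast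
      qed
    qed
    thus "?f ` carrier G = carrier A" using eq by simp
  qed
qed

lemma semireg: "\<forall>g\<in>carrier G. \<forall>v\<in>V. rho g v = v \<longrightarrow> g = \<one>"
proof (intro ballI impI)
  fix g v assume g: "g \<in> carrier G" and v: "v \<in> V" and e: "rho g v = v"
  obtain c i where c: "v = (c, i)" "c \<in> carrier G" "i < m" using v by (cases v) (auto simp: inV)
  have "c \<otimes> g = c \<otimes> \<one>" using e c v by (simp add: rho_apply)
  thus "g = \<one>" using c g by (metis l_cancel one_closed)
qed

lemma orbits: "card {(\<lambda>h. h v) ` H | v. v \<in> V} = m"
proof -
  have orb: "(\<lambda>h. h v) ` H = carrier G \<times> {snd v}" if v: "v \<in> V" for v
  proof -
    obtain c i where c: "v = (c, i)" "c \<in> carrier G" "i < m" using v by (cases v) (auto simp: inV)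
    have "(\<lambda>h. h v) ` H = (\<lambda>g. (c \<otimes> g, i)) ` carrier G"
      using c v by (auto simp: rho_apply image_image)
    also have "\<dots> = carrier G \<times> {i}"
    proof
      show "(\<lambda>g. (c \<otimes> g, i)) ` carrier G \<subseteq> carrier G \<times> {i}" using c by auto
      show "carrier G \<times> {i} \<subseteq> (\<lambda>g. (c \<otimes> g, i)) ` carrier G"
      proof
        fix w assume "w \<in> carrier G \<times> {i}"
        then obtain d where d: "w = (d, i)" "d \<in> carrier G" by auto
        have "c \<otimes> (inv c \<otimes> d) = d" using c d by (simp add: m_assoc[symmetric])
        thus "w \<in> (\<lambda>g. (c \<otimes> g, i)) ` carrier G" using c d by (metis image_eqI inv_closed m_closed)
      qed
    qed
    finally show ?thesis using c by simp
  qed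
  have "{(\<lambda>h. h v) ` H | v. v \<in> V} = (\<lambda>i. carrier G \<times> {i}) ` {0..<m}"
  proof
    show "{(\<lambda>h. h v) ` H | v. v \<in> V} \<subseteq> (\<lambda>i. carrier G \<times> {i}) ` {0..<m}"
      using orb by (force simp: layered_verts_def)
    show "(\<lambda>i. carrier G \<times> {i}) ` {0..<m} \<subseteq> {(\<lambda>h. h v) ` H | v. v \<in> V}"
    proof
      fix Z assume "Z \<in> (\<lambda>i. carrier G \<times> {i}) ` {0..<m}"
      then obtain i where i: "i < m" "Z = carrier G \<times> {i}" by auto
      have "Z = (\<lambda>h. h (\<one>, i)) ` H" using orb[OF one_V[OF i(1)]] i by simp
      thus "Z \<in> {(\<lambda>h. h v) ` H | v. v \<in> V}" using one_V[OF i(1)] by blast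
    qed
  qed
  moreover have "inj_on (\<lambda>i. carrier G \<times> {i}) {0..<m}"
    by (auto simp: inj_on_def)
  ultimately show ?thesis by (simp add: card_image)
qed


lemma BiCay_char: assumes "i < 2" "j < 2"
  shows "BiCay G R L S (a, i) (b, j) \<longleftrightarrow> Th (a, i) (b, j)"
proof
  assume "BiCay G R L S (a, i) (b, j)"
  thus "Th (a, i) (b, j)" by (auto simp: BiCay_def Theta_def adj_of_edges_def Theta_edges_def)
next
  assume "Th (a, i) (b, j)"
  hence t: "tadj (a, i) (b, j)" by (simp add: Theta_char)
  hence ab: "a \<in> carrier G" "b \<in> carrier G" by (auto simp: tadj_def)
  from t assms consider
      "i = 0 \<and> j = 0 \<and> b \<otimes> inv a \<in> R" | "i = 1 \<and> j = 1 \<and> b \<otimes> inv a \<in> L" |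
      "i = 0 \<and> j = 1 \<and> b \<otimes> inv a \<in> S" | "i = 1 \<and> j = 0 \<and> a \<otimes> inv b \<in> S"
    using m3 by (auto simp: tadj_def)
  hence "{(a, i), (b, j)} \<in> BiCay_edges G R L S"
  proof cases
    case 1
    hence "{(a, i), (b, j)} = {(a, 0), ((b \<otimes> inv a) \<otimes> a, 0)}" using ab by (simp add: alg3)
    thus ?thesis using 1 ab unfolding BiCay_edges_def by blast
  next
    case 2
    hence "{(a, i), (b, j)} = {(a, 1), ((b \<otimes> inv a) \<otimes> a, 1)}" using ab by (simp add: alg3)
    thus ?thesis using 2 ab unfolding BiCay_edges_def by blast
  next
    case 3
    hence "{(a, i), (b, j)} = {(a, 0), ((b \<otimes> inv a) \<otimes> a, 1)}" using ab by (simp add: alg3)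
    thus ?thesis using 3 ab unfolding BiCay_edges_def by blast
  next
    case 4
    hence "{(a, i), (b, j)} = {(b, 0), ((a \<otimes> inv b) \<otimes> b, 1)}" using ab by (auto simp: alg3)
    thus ?thesis using 4 ab unfolding BiCay_edges_def by blast
  qed
  thus "BiCay G R L S (a, i) (b, j)" by (simp add: BiCay_def adj_of_edges_def)
qed

lemma tadj_layer: "tadj (c, k) (b, j) \<Longrightarrow> 1 \<le> k \<Longrightarrow> k + 2 \<le> m \<Longrightarrow> j \<le> Suc k \<and> (j = Suc k \<longrightarrow> b = c)"
  unfolding tadj_def by auto

abbreviation "V2 \<equiv> layered_verts G 2"

lemma V2_sub: "V2 \<subseteq> V" using m3 by (auto simp: layered_verts_def)

lemma low_layer:
  assumes ni: "\<forall>i\<in>{2..m-1}. \<not> induced_nbhd_iso V Th (\<one>, 0) (\<one>, i) \<and> \<not> induced_nbhd_iso V Th (\<one>, 1) (\<one>, i)"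
    and f: "f \<in> graph_auts V Th" and v: "v \<in> V2"
  shows "f v \<in> V2"
proof -
  obtain g i where gi: "v = (g, i)" "g \<in> carrier G" "i < 2" using v by (cases v) (auto simp: layered_verts_def)
  have vV: "v \<in> V" using v V2_sub by blast
  obtain b j where bj: "f v = (b, j)" by (cases "f v")
  have bjV: "(b, j) \<in> V" using aut_V[OF f vV] bj by simp
  hence b: "b \<in> carrier G" "j < m" by (auto simp: inV)
  show ?thesis
  proof (rule ccontr)
    assume "f v \<notin> V2"
    hence j2: "2 \<le> j" using bj b by (auto simp: layered_verts_def)
    let ?psi = "compose V (rho (inv b)) (compose V f (rho g))"
    have psi: "?psi \<in> graph_auts V Th"
      by (rule aut_compose[OF rho_aut aut_compose[OF f rho_aut]]) (use gi b in auto)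
    have iV: "(\<one>, i) \<in> V" using gi m3 by (simp add: inV)
    have "?psi (\<one>, i) = (\<one>, j)"
    proof -
      have "rho g (\<one>, i) = v" using rho_one[OF iV gi(2)] gi by simp
      hence "compose V f (rho g) (\<one>, i) = (b, j)" using iV bj by (simp add: compose_eq)
      moreover have "compose V f (rho g) (\<one>, i) \<in> V"
        using aut_V[OF aut_compose[OF f rho_aut[OF gi(2)]] iV] .
      ultimately show ?thesis using b iV by (simp add: compose_eq rho_apply)
    qed
    hence "induced_nbhd_iso V Th (\<one>, i) (\<one>, j)" using aut_nbhd_iso[OF psi iV] by simp
    moreover have "j \<in> {2..m-1}" using j2 b by auto
    ultimately show False using ni gi(3) by (cases i) auto
  qed
qed


lemma finV2: "finite V2" using fin by (simp add: layered_verts_def)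

lemma restrict_is_rho:
  assumes bic: "is_mGRR G 2 (BiCay G R L S)"
    and ni: "\<forall>i\<in>{2..m-1}. \<not> induced_nbhd_iso V Th (\<one>, 0) (\<one>, i) \<and> \<not> induced_nbhd_iso V Th (\<one>, 1) (\<one>, i)"
    and f: "f \<in> graph_auts V Th"
  shows "\<exists>h\<in>carrier G. \<forall>a\<in>carrier G. \<forall>i<2. f (a, i) = (a \<otimes> h, i)"
proof -
  let ?B = "BiCay G R L S"
  let ?A2 = "AutGroup V2 ?B"
  let ?H2 = "rmult_map G 2 ` carrier G"
  have sub: "f ` V2 \<subseteq> V2" using low_layer[OF ni f] by blast
  have inj: "inj_on f V2" using aut_inj[OF f] V2_sub by (rule inj_on_subset)
  have img: "f ` V2 = V2"
    using card_subset_eq[OF finV2 sub] card_image[OF inj] by simp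
  let ?psi = "restrict f V2"
  have psiB: "?psi \<in> Bij V2"
    unfolding Bij_def using inj img by (simp add: bij_betw_def inj_on_def)
  have psiA: "?psi \<in> graph_auts V2 ?B"
    unfolding graph_auts_def
  proof (intro CollectI conjI ballI psiB)
    fix u w assume u: "u \<in> V2" and w: "w \<in> V2"
    have fu: "f u \<in> V2" and fw: "f w \<in> V2" using sub u w by auto
    have B: "\<And>p q. p \<in> V2 \<Longrightarrow> q \<in> V2 \<Longrightarrow> ?B p q \<longleftrightarrow> Th p q"
    proof -
      fix p q assume "p \<in> V2" "q \<in> V2"
      thus "?B p q \<longleftrightarrow> Th p q" by (cases p, cases q) (auto simp: layered_verts_def BiCay_char)
    qed
    have "?B u w \<longleftrightarrow> Th u w" using B u w .
    also have "\<dots> \<longleftrightarrow> Th (f u) (f w)" using aut_adj[OF f] u w V2_sub by blast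
    also have "\<dots> \<longleftrightarrow> ?B (f u) (f w)" using B fu fw by simp
    finally show "?B u w \<longleftrightarrow> ?B (?psi u) (?psi w)" using u w by simp
  qed
  from bic have H2sub: "?H2 \<subseteq> carrier ?A2" and isoH: "?A2\<lparr>carrier := ?H2\<rparr> \<cong> G"
    and isoA: "?A2 \<cong> G" unfolding is_mGRR_def Let_def by auto
  have cA: "card (carrier ?A2) = card (carrier G)" using iso_same_card[OF isoA] .
  have cH: "card ?H2 = card (carrier G)" using iso_same_card[OF isoH] by simp
  have finA: "finite (carrier ?A2)" using iso_finite[OF isoA] fin by simp
  have eq: "?H2 = carrier ?A2" using card_subset_eq[OF finA H2sub] cA cH by simp
  have "?psi \<in> ?H2" using psiA eq by simp
  then obtain h where h: "h \<in> carrier G" "?psi = rmult_map G 2 h" by auto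
  show ?thesis
  proof (intro bexI[OF _ h(1)] ballI allI impI)
    fix a i assume a: "a \<in> carrier G" and i: "(i::nat) < 2"
    have "(a, i) \<in> V2" using a i by (simp add: layered_verts_def)
    hence "f (a, i) = rmult_map G 2 h (a, i)" using h(2) by (metis restrict_apply')
    thus "f (a, i) = (a \<otimes> h, i)" using \<open>(a, i) \<in> V2\<close> by (simp add: rmult_map_def)
  qed
qed

lemma aut_is_rho:
  assumes bic: "is_mGRR G 2 (BiCay G R L S)"
    and ni: "\<forall>i\<in>{2..m-1}. \<not> induced_nbhd_iso V Th (\<one>, 0) (\<one>, i) \<and> \<not> induced_nbhd_iso V Th (\<one>, 1) (\<one>, i)"
    and f: "f \<in> graph_auts V Th"
  shows "f \<in> H"
proof -
  obtain h where h: "h \<in> carrier G" and base: "\<And>a i. a \<in> carrier G \<Longrightarrow> i < 2 \<Longrightarrow> f (a, i) = (a \<otimes> h, i)"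
    using restrict_is_rho[OF bic ni f] by blast
  have Q: "\<forall>a\<in>carrier G. \<forall>i\<le>k. f (a, i) = (a \<otimes> h, i)" if "1 \<le> k" "k < m" for k
    using that
  proof (induction k)
    case 0 thus ?case by simp
  next
    case (Suc k)
    show ?case
    proof (cases "k = 0")
      case True thus ?thesis using base by auto
    next
      case False
      hence k1: "1 \<le> k" and km: "k + 2 \<le> m" using Suc.prems by auto
      have IH: "\<forall>a\<in>carrier G. \<forall>i\<le>k. f (a, i) = (a \<otimes> h, i)" using Suc.IH k1 km by auto
      have new: "f (a, Suc k) = (a \<otimes> h, Suc k)" if a: "a \<in> carrier G" for a
      proof -
        have u: "(a, k) \<in> V" and w: "(a, Suc k) \<in> V" using a km by (auto simp: inV)
        have "Th (a, k) (a, Suc k)" using a k1 km by (simp add: Theta_char tadj_def)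
        hence "Th (f (a, k)) (f (a, Suc k))" using aut_adj[OF f u w] by simp
        moreover obtain b j where bj: "f (a, Suc k) = (b, j)" by (cases "f (a, Suc k)")
        ultimately have "tadj (a \<otimes> h, k) (b, j)" using IH a by (simp add: Theta_char)
        from tadj_layer[OF this k1 km] have lay: "j \<le> Suc k" "j = Suc k \<longrightarrow> b = a \<otimes> h" by auto
        have bV: "(b, j) \<in> V" using aut_V[OF f w] bj by simp
        hence b: "b \<in> carrier G" by (simp add: inV)
        show ?thesis
        proof (cases "j = Suc k")
          case True thus ?thesis using lay bj by simp
        next
          case False
          hence jk: "j \<le> k" using lay by simp
          have bh: "b \<otimes> inv h \<in> carrier G" using b h by simp
          have "f (b \<otimes> inv h, j) = ((b \<otimes> inv h) \<otimes> h, j)" using IH bh jk by blast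
          also have "\<dots> = (b, j)" using b h by (simp add: m_assoc)
          finally have "f (b \<otimes> inv h, j) = f (a, Suc k)" using bj by simp
          moreover have "(b \<otimes> inv h, j) \<in> V" using bh jk km by (simp add: inV)
          ultimately have "(b \<otimes> inv h, j) = (a, Suc k)" using inj_onD[OF aut_inj[OF f]] w by blast
          thus ?thesis using False by simp
        qed
      qed
      show ?thesis
      proof (intro ballI allI impI)
        fix a i assume a: "a \<in> carrier G" and i: "i \<le> Suc k"
        show "f (a, i) = (a \<otimes> h, i)"
        proof (cases "i = Suc k")
          case True thus ?thesis using new a by simp
        next
          case False thus ?thesis using IH a i by simp
        qed
      qed
    qed
  qed
  have "f = rho h"
  proof
    fix v show "f v = rho h v"
    proof (cases "v \<in> V")
      case True
      then obtain a i where v: "v = (a, i)" "a \<in> carrier G" "i < m" by (cases v) (auto simp: inV)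
      have "f v = (a \<otimes> h, i)" using Q[of "m - 1"] m3 v by auto
      thus ?thesis using True v by (simp add: rho_apply)
    next
      case False
      have "f \<in> extensional V" using f by (simp add: graph_auts_def Bij_def)
      hence "f v = undefined" using False by (rule extensional_arb)
      thus ?thesis using False by (simp add: rmult_map_def)
    qed
  qed
  thus ?thesis using h by simp
qed


lemma final:
  assumes c1: "card R = card L" and c2: "card L + card S = card T + 1"
    and bic: "is_mGRR G 2 (BiCay G R L S)"
    and ni: "\<forall>i\<in>{2..m-1}. \<not> induced_nbhd_iso V Th (\<one>, 0) (\<one>, i) \<and> \<not> induced_nbhd_iso V Th (\<one>, 1) (\<one>, i)"
  shows "is_mGRR G m Th"
proof -
  have eq: "graph_auts V Th = H" using aut_is_rho[OF bic ni] H_sub by blast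
  have AH: "A\<lparr>carrier := H\<rparr> = A" by (simp add: AutGroup_def eq)
  have iso: "A \<cong> G" using iso_sym[OF G_iso_A[OF eq]] .
  have sg: "subgroup H A" using group.subgroup_self[OF group_Aut, of V Th] eq by simp
  have finV: "finite V" using fin by (simp add: layered_verts_def)
  show ?thesis unfolding is_mGRR_def Let_def
    using finV simple regular[OF c1 c2] H_sub sg AH iso semireg orbits by simp
qed

end

theorem lemma4p2:
  fixes G :: "('a, 'b) monoid_scheme" and m :: nat and R L S T :: "'a set" and x :: 'a
  assumes "group G" and "finite (carrier G)" and "m \<ge> 3"
    and "cayley_subset G R" and "cayley_subset G L" and "cayley_subset G T"
    and "S \<subseteq> carrier G"
    and "int (card R) = int (card L)" and "int (card L) = int (card T) - int (card S) + 1"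
    and "x \<in> carrier G - S"
    and "is_mGRR G 2 (BiCay G R L S)"
    and "\<forall>i\<in>{2..m-1}.
           \<not> induced_nbhd_iso (layered_verts G m) (Theta G m R L S T x) (monoid.one G, 0) (monoid.one G, i)
         \<and> \<not> induced_nbhd_iso (layered_verts G m) (Theta G m R L S T x) (monoid.one G, 1) (monoid.one G, i)"
  shows "is_mGRR G m (Theta G m R L S T x)"
proof -
  have loc: "thsetup G m R L S T x"
    by (rule thsetup.intro[OF assms(1)], rule thsetup_axioms.intro) (use assms in auto)
  interpret thsetup G m R L S T x by (rule loc)
  have c1: "card R = card L" using assms(8) by simp
  have c2: "card L + card S = card T + 1" using assms(9) by linarith
  show ?thesis using final[OF c1 c2 assms(11) assms(12)] .
qed

end
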